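(* Let $m\in\mathbb{N}_+$. There exist strictly monotonic sequences $(t_i)$ and $(\tau_i)$ of natural numbers and uncountably many $m$-tuples $\alpha=(\alpha_1,\dots,\alpha_m)\in(0,1)^m$ such that, for the action $\mathbb{Z}^m\curvearrowright_\alpha\mathbb{T}^1$, the family of levels $(t_i\mathbb{T}^1,d_{\mathbb{Z}^m})_i$ of the warped cone is quasi-isometric to the family of tori $(\mathbb{T}^{m+1},\tau_i d)_i$.
   Context: $\mathbb{T}^1=\mathbb{R}/\mathbb{Z}$ with standard metric $d$ of circumference $1$, $\mathbb{T}^{m+1}$ with its standard flat metric $d$. The action $\mathbb{Z}^m\curvearrowright_\alpha\mathbb{T}^1$ is $(n_1,\dots,n_m).z=z+\sum_i n_i\alpha_i$, and $\mathbb{Z}^m$ has generating set $\{\pm e_1,\dots,\pm e_m\}$. For $t>0$, $d_{\mathbb{Z}^m}$ is the largest metric on $\mathbb{T}^1$ with $d_{\mathbb{Z}^m}(z,z')\le td(z,z')$ and $d_{\mathbb{Z}^m}(z,z\pm\alpha_j)\le1$ for all $j$. Two sequences of metric spaces $(X_i),(Y_i)$ are quasi-isometric if there are $C\ge1,A\ge0$ and maps $f_i:X_i\to Y_i$ with $C^{-1}d(x,x')-A\le d(f_i(x),f_i(x'))\le Cd(x,x')+A$ and the $A$-neighbourhood of $f_i(X_i)$ equal to $Y_i$. *)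

theory Defs
  imports Complex_Main "HOL-Library.Countable_Set"
begin

text \<open>The circle T^1 = R/Z, represented by the fundamental domain [0,1).\<close>
definition circle :: "real set" where
  "circle = {0..<1}"

definition cdist :: "real \<Rightarrow> real \<Rightarrow> real" where
  "cdist x y = min (frac (x - y)) (1 - frac (x - y))"

text \<open>The torus T^n = R^n/Z^n, points as functions on indices < n with values in [0,1),
  zero outside; flat metric.\<close>
definition torus :: "nat \<Rightarrow> (nat \<Rightarrow> real) set" where
  "torus n = {x. (\<forall>i<n. 0 \<le> x i \<and> x i < 1) \<and> (\<forall>i\<ge>n. x i = 0)}"

definition torus_dist :: "nat \<Rightarrow> (nat \<Rightarrow> real) \<Rightarrow> (nat \<Rightarrow> real) \<Rightarrow> real" where
  "torus_dist n x y = sqrt (\<Sum>i<n. (cdist (x i) (y i))\<^sup>2)"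

definition metric_on :: "'a set \<Rightarrow> ('a \<Rightarrow> 'a \<Rightarrow> real) \<Rightarrow> bool" where
  "metric_on X \<delta> \<longleftrightarrow>
     (\<forall>x\<in>X. \<forall>y\<in>X. 0 \<le> \<delta> x y \<and> (\<delta> x y = 0 \<longleftrightarrow> x = y) \<and> \<delta> x y = \<delta> y x) \<and>
     (\<forall>x\<in>X. \<forall>y\<in>X. \<forall>z\<in>X. \<delta> x z \<le> \<delta> x y + \<delta> y z)"

text \<open>Metrics on T^1 admissible for the warped metric of the action of Z^m by the rotations
  alpha_1, ..., alpha_m (generators \<plusminus>e_j act by z \<mapsto> z \<plusminus> alpha_j mod 1) at level t.\<close>
definition warp_admissible :: "nat \<Rightarrow> (nat \<Rightarrow> real) \<Rightarrow> real \<Rightarrow> (real \<Rightarrow> real \<Rightarrow> real) \<Rightarrow> bool" where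
  "warp_admissible m \<alpha> t \<delta> \<longleftrightarrow>
     metric_on circle \<delta> \<and>
     (\<forall>z\<in>circle. \<forall>z'\<in>circle. \<delta> z z' \<le> t * cdist z z') \<and>
     (\<forall>z\<in>circle. \<forall>j<m. \<delta> z (frac (z + \<alpha> j)) \<le> 1 \<and> \<delta> z (frac (z - \<alpha> j)) \<le> 1)"

definition warped_dist :: "nat \<Rightarrow> (nat \<Rightarrow> real) \<Rightarrow> real \<Rightarrow> real \<Rightarrow> real \<Rightarrow> real" where
  "warped_dist m \<alpha> t z z' = Sup {\<delta> z z' | \<delta>. warp_admissible m \<alpha> t \<delta>}"

definition qi_families ::
  "(nat \<Rightarrow> 'a set) \<Rightarrow> (nat \<Rightarrow> 'a \<Rightarrow> 'a \<Rightarrow> real) \<Rightarrow> (nat \<Rightarrow> 'b set) \<Rightarrow> (nat \<Rightarrow> 'b \<Rightarrow> 'b \<Rightarrow> real) \<Rightarrow> bool" where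
  "qi_families X dX Y dY \<longleftrightarrow>
     (\<exists>C A. C \<ge> 1 \<and> A \<ge> 0 \<and> (\<forall>i. \<exists>f. (\<forall>x\<in>X i. f x \<in> Y i) \<and>
        (\<forall>x\<in>X i. \<forall>x'\<in>X i. dX i x x' / C - A \<le> dY i (f x) (f x') \<and>
                             dY i (f x) (f x') \<le> C * dX i x x' + A) \<and>
        (\<forall>y\<in>Y i. \<exists>x\<in>X i. dY i y (f x) \<le> A)))"

end

theory Submission
  imports Defs "HOL-Analysis.L2_Norm" "HOL-Computational_Algebra.Primes"
begin


definition nrm :: "real \<Rightarrow> real" where "nrm x = \<bar>x - of_int (round x)\<bar>"

lemma nrm_le: "nrm x \<le> \<bar>x - of_int n\<bar>"
  unfolding nrm_def by (rule round_diff_minimal)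

lemma nrm_ge0: "0 \<le> nrm x" by (simp add: nrm_def)

lemma nrm_le_abs: "nrm x \<le> \<bar>x\<bar>" using nrm_le[of x 0] by simp

lemma nrm_shift: "nrm (x + of_int n) = nrm x"
proof (rule antisym)
  show "nrm (x + of_int n) \<le> nrm x"
    using nrm_le[of "x + of_int n" "round x + n"] by (simp add: nrm_def)
  show "nrm x \<le> nrm (x + of_int n)"
    using nrm_le[of x "round (x + of_int n) - n"] by (simp add: nrm_def)
qed

lemma nrm_neg: "nrm (- x) = nrm x"
proof (rule antisym)
  show "nrm (- x) \<le> nrm x" using nrm_le[of "-x" "- round x"] by (simp add: nrm_def)
  show "nrm x \<le> nrm (-x)" using nrm_le[of "x" "- round (-x)"] by (simp add: nrm_def)
qed

lemma nrm_add: "nrm (x + y) \<le> nrm x + nrm y"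
  using nrm_le[of "x+y" "round x + round y"] by (simp add: nrm_def)

lemma nrm_diff_comm: "nrm (x - y) = nrm (y - x)"
  using nrm_neg[of "x - y"] by simp

lemma nrm_mult_int: "nrm (of_int n * x) \<le> \<bar>of_int n\<bar> * nrm x"
proof -
  have "nrm (of_int n * x) \<le> \<bar>of_int n * x - of_int (n * round x)\<bar>" by (rule nrm_le)
  also have "\<dots> = \<bar>of_int n\<bar> * nrm x" by (simp add: nrm_def abs_mult[symmetric] algebra_simps)
  finally show ?thesis .
qed

lemma nrm_half: "nrm x \<le> 1/2"
  using of_int_round_ge[of x] of_int_round_le[of x] unfolding nrm_def by arith

lemma nrm_int: "x \<in> \<int> \<Longrightarrow> nrm x = 0"
  by (metis Ints_cases add_0 nrm_shift nrm_def abs_zero diff_self of_int_0 round_0)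

lemma nrm_zero: "nrm x = 0 \<Longrightarrow> -1 < x \<Longrightarrow> x < 1 \<Longrightarrow> x = 0"
proof -
  assume "nrm x = 0" "-1 < x" "x < 1"
  then have e: "x = of_int (round x)" by (simp add: nrm_def)
  with \<open>-1 < x\<close> \<open>x < 1\<close> have "-1 < round x" "round x < 1"
    by (metis of_int_less_iff of_int_minus of_int_1)+
  then have "round x = 0" by simp
  with e show "x = 0" by simp
qed

lemma nrm_frac: "nrm (frac x) = nrm x"
  using nrm_shift[of x "- floor x"] by (simp add: frac_def)

lemma cdist_nrm: "cdist x y = nrm (x - y)"
proof -
  define d where "d = x - y"
  have fr: "frac d = d - of_int (floor d)" by (simp add: frac_def)
  show ?thesis
  proof (cases "frac d \<ge> 1/2")
    case True
    have "d \<notin> \<int>"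
    proof
      assume "d \<in> \<int>" then have "frac d = 0" by simp
      with True show False by simp
    qed
    then have "d \<noteq> of_int (floor d)" by (metis Ints_of_int)
    then have "ceiling d = floor d + 1"
      by (simp add: ceiling_altdef)
    then have "round d = floor d + 1" using True by (simp add: round_altdef)
    then show ?thesis using True unfolding cdist_def nrm_def d_def[symmetric] fr by simp
  next
    case False
    then have "round d = floor d" by (simp add: round_altdef)
    then show ?thesis using False unfolding cdist_def nrm_def d_def[symmetric] fr
      using frac_ge_0[of d] fr by simp
  qed
qed

lemma frac_circle: "frac x \<in> circle"
  by (simp add: circle_def frac_lt_1)

lemma frac_frac_add: "frac (frac a + b) = frac (a + b)"
proof -
  have "frac a + b = (a + b) + of_int (- floor a)" by (simp add: frac_def)
  then show ?thesis by (simp only: frac_add_of_int_right)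
qed

lemma circle_frac: "x \<in> circle \<Longrightarrow> frac x = x"
  by (simp add: circle_def)

lemma cdist_ge0: "0 \<le> cdist x y" by (simp add: cdist_nrm nrm_ge0)
lemma cdist_half: "cdist x y \<le> 1/2" using nrm_half[of "x-y"] by (simp add: cdist_nrm)
lemma cdist_sym: "cdist x y = cdist y x" by (simp add: cdist_nrm nrm_diff_comm)
lemma cdist_tri: "cdist x z \<le> cdist x y + cdist y z"
  using nrm_add[of "x - y" "y - z"] by (simp add: cdist_nrm)
lemma cdist_self: "cdist x x = 0" by (simp add: cdist_nrm nrm_def)

lemma cdist_metric: "metric_on circle cdist"
  unfolding metric_on_def
proof (intro conjI ballI)
  fix x y assume x: "x \<in> circle" and y: "y \<in> circle"
  show "0 \<le> cdist x y" by (rule cdist_ge0)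
  show "cdist x y = cdist y x" by (rule cdist_sym)
  show "(cdist x y = 0) = (x = y)"
  proof
    assume "cdist x y = 0"
    then have "nrm (x - y) = 0" by (simp add: cdist_nrm)
    moreover have "-1 < x - y" "x - y < 1" using x y by (auto simp: circle_def)
    ultimately show "x = y" using nrm_zero by force
  qed (simp add: cdist_self)
next
  fix x y z show "cdist x z \<le> cdist x y + cdist y z" by (rule cdist_tri)
qed

lemma torus_le_sum: "torus_dist n x y \<le> (\<Sum>i<n. cdist (x i) (y i))"
proof -
  have "torus_dist n x y = L2_set (\<lambda>i. cdist (x i) (y i)) {..<n}"
    by (simp add: torus_dist_def L2_set_def)
  also have "\<dots> \<le> (\<Sum>i<n. cdist (x i) (y i))" by (rule L2_set_le_sum) (simp add: cdist_ge0)
  finally show ?thesis .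
qed

lemma sum_le_torus: "(\<Sum>i<n. cdist (x i) (y i)) \<le> real n * torus_dist n x y"
proof -
  have "torus_dist n x y = L2_set (\<lambda>i. cdist (x i) (y i)) {..<n}"
    by (simp add: torus_dist_def L2_set_def)
  then have "\<And>i. i < n \<Longrightarrow> cdist (x i) (y i) \<le> torus_dist n x y"
    using member_le_L2_set[of "{..<n}"] by auto
  then have "(\<Sum>i<n. cdist (x i) (y i)) \<le> (\<Sum>i<n. torus_dist n x y)" by (intro sum_mono) auto
  then show ?thesis by simp
qed

lemma adm_metric: "warp_admissible m \<alpha> t \<delta> \<Longrightarrow> metric_on circle \<delta>"
  by (simp add: warp_admissible_def)

lemma metric_tri: "metric_on X \<delta> \<Longrightarrow> x \<in> X \<Longrightarrow> y \<in> X \<Longrightarrow> z \<in> X \<Longrightarrow> \<delta> x z \<le> \<delta> x y + \<delta> y z"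
  by (simp add: metric_on_def)

lemma metric_self: "metric_on X \<delta> \<Longrightarrow> x \<in> X \<Longrightarrow> \<delta> x x = 0"
  by (simp add: metric_on_def)

lemma step_iter:
  assumes met: "metric_on circle \<delta>" and st: "\<forall>y\<in>circle. \<delta> y (frac (y + \<beta>)) \<le> 1"
    and x: "x \<in> circle"
  shows "\<delta> x (frac (x + real n * \<beta>)) \<le> real n"
proof (induction n)
  case 0
  then show ?case using met x by (simp add: circle_frac metric_self)
next
  case (Suc n)
  define y where "y = frac (x + real n * \<beta>)"
  have y: "y \<in> circle" by (simp add: y_def frac_circle)
  have e: "frac (x + real (Suc n) * \<beta>) = frac (y + \<beta>)"
    by (simp add: y_def frac_frac_add algebra_simps)
  have "\<delta> x (frac (y + \<beta>)) \<le> \<delta> x y + \<delta> y (frac (y + \<beta>))"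
    using metric_tri[OF met x y frac_circle] .
  also have "\<dots> \<le> real n + 1"
  proof -
    have "\<delta> y (frac (y + \<beta>)) \<le> 1" using st y by blast
    moreover have "\<delta> x y \<le> real n" using Suc.IH unfolding y_def .
    ultimately show ?thesis by linarith
  qed
  finally show ?case using e by simp
qed

lemma adm_jumps:
  "warp_admissible m \<alpha> t \<delta> \<Longrightarrow> \<forall>z\<in>circle. \<forall>j<m. \<delta> z (frac (z + \<alpha> j)) \<le> 1 \<and> \<delta> z (frac (z - \<alpha> j)) \<le> 1"
  unfolding warp_admissible_def by (elim conjE)

lemma adm_plus: "warp_admissible m \<alpha> t \<delta> \<Longrightarrow> j < m \<Longrightarrow> \<forall>y\<in>circle. \<delta> y (frac (y + \<alpha> j)) \<le> 1"
  using adm_jumps by blast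

lemma adm_minus: "warp_admissible m \<alpha> t \<delta> \<Longrightarrow> j < m \<Longrightarrow> \<forall>y\<in>circle. \<delta> y (frac (y + - \<alpha> j)) \<le> 1"
proof -
  assume "warp_admissible m \<alpha> t \<delta>" "j < m"
  then have "\<forall>y\<in>circle. \<delta> y (frac (y - \<alpha> j)) \<le> 1" using adm_jumps by blast
  then show ?thesis by (simp only: diff_conv_add_uminus)
qed

lemma jump_int:
  assumes adm: "warp_admissible m \<alpha> t \<delta>" and j: "j < m" and x: "x \<in> circle"
  shows "\<delta> x (frac (x + of_int n * \<alpha> j)) \<le> \<bar>of_int n\<bar>"
proof (cases "n \<ge> 0")
  case True
  define k where "k = nat n"
  have k: "n = int k" using True by (simp add: k_def)
  have nk: "x + of_int n * \<alpha> j = x + real k * \<alpha> j" using k by simp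
  have a: "\<bar>of_int n\<bar> = real k" using k by simp
  show ?thesis unfolding nk a by (rule step_iter[OF adm_metric[OF adm] adm_plus[OF adm j] x])
next
  case False
  define k where "k = nat (- n)"
  have k: "n = - int k" using False by (simp add: k_def)
  have nk: "x + of_int n * \<alpha> j = x + real k * (- \<alpha> j)" using k by simp
  have a: "\<bar>of_int n\<bar> = real k" using k by simp
  show ?thesis unfolding nk a by (rule step_iter[OF adm_metric[OF adm] adm_minus[OF adm j] x])
qed

lemma jumps:
  assumes adm: "warp_admissible m \<alpha> t \<delta>" and x: "x \<in> circle"
  shows "k \<le> m \<Longrightarrow> \<delta> x (frac (x + (\<Sum>j<k. of_int (g j) * \<alpha> j))) \<le> (\<Sum>j<k. \<bar>of_int (g j)\<bar>)"
proof (induction k)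
  case 0
  then show ?case using adm_metric[OF adm] x by (simp add: circle_frac metric_self)
next
  case (Suc k)
  define y where "y = frac (x + (\<Sum>j<k. of_int (g j) * \<alpha> j))"
  have y: "y \<in> circle" by (simp add: y_def frac_circle)
  have e: "frac (x + (\<Sum>j<Suc k. of_int (g j) * \<alpha> j)) = frac (y + of_int (g k) * \<alpha> k)"
    by (simp add: y_def frac_frac_add algebra_simps)
  have "\<delta> x (frac (y + of_int (g k) * \<alpha> k)) \<le> \<delta> x y + \<delta> y (frac (y + of_int (g k) * \<alpha> k))"
    using metric_tri[OF adm_metric[OF adm] x y frac_circle] .
  also have "\<dots> \<le> (\<Sum>j<k. \<bar>of_int (g j)\<bar>) + \<bar>of_int (g k)\<bar>"
  proof -
    have "\<delta> y (frac (y + of_int (g k) * \<alpha> k)) \<le> \<bar>of_int (g k)\<bar>"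
      using jump_int[OF adm _ y, of k "g k"] Suc.prems by simp
    moreover have "\<delta> x y \<le> (\<Sum>j<k. \<bar>of_int (g j)\<bar>)" using Suc.IH Suc.prems unfolding y_def by simp
    ultimately show ?thesis by linarith
  qed
  finally have calc: "\<delta> x (frac (y + of_int (g k) * \<alpha> k)) \<le> (\<Sum>j<k. \<bar>of_int (g j)\<bar>) + \<bar>of_int (g k)\<bar>" .
  have s: "(\<Sum>j<Suc k. \<bar>of_int (g j)\<bar>) = (\<Sum>j<k. \<bar>of_int (g j)\<bar>) + (\<bar>of_int (g k)\<bar> :: real)" by simp
  show ?case unfolding e s by (rule calc)
qed

lemma path_bound:
  assumes adm: "warp_admissible m \<alpha> t \<delta>" and x: "x \<in> circle" and y: "y \<in> circle"
  shows "\<delta> x y \<le> (\<Sum>j<m. \<bar>of_int (g j)\<bar>) + t * nrm (x + (\<Sum>j<m. of_int (g j) * \<alpha> j) - y)"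
proof -
  define p where "p = frac (x + (\<Sum>j<m. of_int (g j) * \<alpha> j))"
  have p: "p \<in> circle" by (simp add: p_def frac_circle)
  have "\<delta> x y \<le> \<delta> x p + \<delta> p y" using metric_tri[OF adm_metric[OF adm] x p y] .
  moreover have "\<delta> x p \<le> (\<Sum>j<m. \<bar>of_int (g j)\<bar>)" unfolding p_def by (rule jumps[OF adm x order_refl])
  moreover have "\<delta> p y \<le> t * cdist p y" using adm p y by (simp add: warp_admissible_def)
  moreover have c: "cdist p y = nrm (x + (\<Sum>j<m. of_int (g j) * \<alpha> j) - y)"
  proof -
    define X where "X = x + (\<Sum>j<m. of_int (g j) * \<alpha> j)"
    have e: "p - y = (X - y) + of_int (- floor X)" unfolding p_def X_def frac_def by simp
    have "cdist p y = nrm ((X - y) + of_int (- floor X))" by (simp only: cdist_nrm e)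
    then show ?thesis by (simp only: nrm_shift X_def)
  qed
  ultimately have "\<delta> x y \<le> (\<Sum>j<m. \<bar>of_int (g j)\<bar>) + t * cdist p y" by linarith
  then show ?thesis unfolding c .
qed



lemma int_div_Ints: "(D::int) dvd a \<Longrightarrow> D \<noteq> 0 \<Longrightarrow> of_int a / of_int D \<in> (\<int> :: real set)"
proof -
  assume "D dvd a" "D \<noteq> 0"
  then obtain k where "a = D * k" by blast
  then have "of_int a / of_int D = (of_int k :: real)" using \<open>D \<noteq> 0\<close> by simp
  then show ?thesis by simp
qed

lemma coprime_inv: "coprime (a::int) b \<Longrightarrow> \<exists>u. b dvd (u * a - 1)"
proof -
  assume "coprime a b"
  then have "gcd a b = 1" by simp
  obtain u v where "u * a + v * b = gcd a b" using bezout_int by blast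
  then have "u * a - 1 = b * (- v)" using \<open>gcd a b = 1\<close> by (simp add: algebra_simps)
  then show ?thesis by (metis dvdI)
qed

lemma prod_dvd_pairwise:
  fixes D :: "nat \<Rightarrow> int"
  assumes cop: "\<And>j k. j<m \<Longrightarrow> k<m \<Longrightarrow> j\<noteq>k \<Longrightarrow> coprime (D j) (D k)"
    and dv: "\<And>j. j<m \<Longrightarrow> D j dvd a"
  shows "n \<le> m \<Longrightarrow> (\<Prod>k<n. D k) dvd a"
proof (induction n)
  case 0 then show ?case by simp
next
  case (Suc n)
  have "coprime (\<Prod>k<n. D k) (D n)"
    by (rule prod_coprime_left) (use Suc.prems cop in auto)
  then have "(\<Prod>k<n. D k) * D n dvd a"
    using Suc dv by (intro divides_mult) auto
  then show ?case by simp
qed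

locale level =
  fixes m :: nat and N P :: real and D c :: "nat \<Rightarrow> int" and \<alpha> :: "nat \<Rightarrow> real"
  assumes m1: "1 \<le> m" and N1: "1 \<le> N" and P1: "1 \<le> P"
  and Dlo: "\<And>j. j<m \<Longrightarrow> N \<le> of_int (D j)"
  and Dhi: "\<And>j. j<m \<Longrightarrow> of_int (D j) \<le> P * N"
  and cop: "\<And>j k. j<m \<Longrightarrow> k<m \<Longrightarrow> j\<noteq>k \<Longrightarrow> coprime (D j) (D k)"
  and copc: "\<And>j. j<m \<Longrightarrow> coprime (c j) (D j)"
  and approx: "\<And>j. j<m \<Longrightarrow> (real m + 1) * N * of_int (\<Prod>k<m. D k) * \<bar>\<alpha> j - of_int (c j) / of_int (D j)\<bar> \<le> 1"
begin

definition Q where "Q = (\<Prod>k<m. D k)"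
definition R where "R j = (\<Prod>k\<in>{..<m}-{j}. D k)"
definition w where "w j = (SOME u. D j dvd (u * (R j * c j) - 1)) mod D j"
definition qq where "qq k = (if k < m then R k * w k else Q)"
definition f where "f z = (\<lambda>k. if k < Suc m then frac (of_int (qq k) * z) else 0)"
definition L where "L x y = (\<Sum>k<Suc m. nrm (of_int (qq k) * (x - y)))"
definition e where "e j = \<alpha> j - of_int (c j) / of_int (D j)"

lemma D_pos: "j < m \<Longrightarrow> 0 < D j"
  using Dlo[of j] N1 by (metis of_int_0_less_iff order_less_le_trans zero_less_one)

lemma R_pos: "0 < R j"
  unfolding R_def by (rule prod_pos) (auto intro: D_pos)

lemma Q_pos: "0 < Q"
  unfolding Q_def by (rule prod_pos) (auto intro: D_pos)

lemma QR: "j < m \<Longrightarrow> Q = D j * R j"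
  unfolding Q_def R_def by (rule prod.remove) auto

lemma R_dvd: "j < m \<Longrightarrow> k < m \<Longrightarrow> j \<noteq> k \<Longrightarrow> D j dvd R k"
  unfolding R_def by (rule dvd_prodI) auto

lemma cop_R: "j < m \<Longrightarrow> coprime (R j * c j) (D j)"
proof -
  assume j: "j < m"
  have "coprime (R j) (D j)" unfolding R_def
    by (rule prod_coprime_left) (use j cop in auto)
  then show ?thesis using copc[OF j] by simp
qed

lemma w_dvd: "j < m \<Longrightarrow> D j dvd (w j * (R j * c j) - 1)"
proof -
  assume j: "j < m"
  define u where "u = (SOME u. D j dvd (u * (R j * c j) - 1))"
  have u: "D j dvd (u * (R j * c j) - 1)"
    unfolding u_def by (rule someI_ex) (rule coprime_inv[OF cop_R[OF j]])
  have wu: "w j = u - D j * (u div D j)" unfolding w_def u_def[symmetric] by (simp add: minus_mult_div_eq_mod)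
  have h: "w j * (R j * c j) - 1 = (u * (R j * c j) - 1) - D j * ((u div D j) * (R j * c j))"
    unfolding wu by (simp add: algebra_simps)
  show ?thesis unfolding h by (rule dvd_diff[OF u]) simp
qed

lemma w_range: "j < m \<Longrightarrow> 0 \<le> w j \<and> w j < D j"
  using D_pos unfolding w_def by simp

lemma qq_range: "k < Suc m \<Longrightarrow> 0 \<le> qq k \<and> qq k \<le> Q"
proof (cases "k < m")
  case True
  have "R k * w k \<le> R k * D k" using w_range[OF True] R_pos by simp
  moreover have "0 \<le> R k * w k" using w_range[OF True] R_pos[of k] by simp
  ultimately show ?thesis using True QR[OF True] by (simp add: qq_def mult.commute)
next
  case False
  then show ?thesis using Q_pos by (simp add: qq_def)
qed

lemma abs_qq: "k < Suc m \<Longrightarrow> \<bar>of_int (qq k) :: real\<bar> \<le> of_int Q"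
  using qq_range by simp

lemma f_torus: "f z \<in> torus (Suc m)"
  by (simp add: f_def torus_def frac_lt_1)

lemma cdist_frac_frac: "cdist (frac a) (frac b) = nrm (a - b)"
proof -
  have h: "frac a - frac b = (a - b) + of_int (floor b - floor a)" by (simp add: frac_def)
  have "cdist (frac a) (frac b) = nrm ((a - b) + of_int (floor b - floor a))" by (simp only: cdist_nrm h)
  then show ?thesis by (simp only: nrm_shift)
qed

lemma cdist_f: "k < Suc m \<Longrightarrow> cdist (f z k) (f z' k) = nrm (of_int (qq k) * (z - z'))"
  by (simp add: f_def cdist_frac_frac algebra_simps)

lemma L_eq: "L z z' = (\<Sum>k<Suc m. cdist (f z k) (f z' k))"
  unfolding L_def by (rule sum.cong) (auto simp: cdist_f)

lemma td_le_L: "torus_dist (Suc m) (f z) (f z') \<le> L z z'"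
  unfolding L_eq by (rule torus_le_sum)

lemma L_le_td: "L z z' \<le> (real m + 1) * torus_dist (Suc m) (f z) (f z')"
  unfolding L_eq using sum_le_torus[where n="Suc m" and x="f z" and y="f z'"] by (simp add: add.commute)

lemma L_ge0: "0 \<le> L z z'"
  unfolding L_def by (rule sum_nonneg) (simp add: nrm_ge0)

lemma L_sym: "L z z' = L z' z"
  unfolding L_def by (rule sum.cong) (auto, metis minus_diff_eq mult_minus_right nrm_neg)

lemma L_tri: "L x z \<le> L x y + L y z"
proof -
  have "L x z \<le> (\<Sum>k<Suc m. nrm (of_int (qq k) * (x - y)) + nrm (of_int (qq k) * (y - z)))"
    unfolding L_def
  proof (rule sum_mono)
    fix k
    show "nrm (of_int (qq k) * (x - z)) \<le> nrm (of_int (qq k) * (x - y)) + nrm (of_int (qq k) * (y - z))"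
      using nrm_add[of "of_int (qq k) * (x - y)" "of_int (qq k) * (y - z)"] by (simp add: algebra_simps)
  qed
  then show ?thesis by (simp add: L_def sum.distrib)
qed

lemma L_lip: "L x y \<le> (real m + 1) * of_int Q * cdist x y"
proof -
  have "L x y \<le> (\<Sum>k<Suc m. of_int Q * cdist x y)"
    unfolding L_def
  proof (rule sum_mono)
    fix k assume "k \<in> {..<Suc m}"
    have "nrm (of_int (qq k) * (x - y)) \<le> \<bar>of_int (qq k)\<bar> * nrm (x - y)" by (rule nrm_mult_int)
    also have "\<dots> \<le> of_int Q * nrm (x - y)"
      using abs_qq[of k] \<open>k \<in> _\<close> nrm_ge0 by (intro mult_right_mono) auto
    finally show "nrm (of_int (qq k) * (x - y)) \<le> of_int Q * cdist x y" by (simp add: cdist_nrm)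
  qed
  then show ?thesis by (simp add: mult.assoc add.commute)
qed

lemma Lv: "L z (frac (z + \<beta>)) = (\<Sum>k<Suc m. nrm (of_int (qq k) * \<beta>))"
  unfolding L_def
proof (rule sum.cong)
  fix k
  have "of_int (qq k) * (z - frac (z + \<beta>)) = - (of_int (qq k) * \<beta>) + of_int (qq k * floor (z + \<beta>))"
    by (simp add: frac_def algebra_simps)
  then show "nrm (of_int (qq k) * (z - frac (z + \<beta>))) = nrm (of_int (qq k) * \<beta>)"
    by (simp only: nrm_shift nrm_neg)
qed simp

lemma Lv_neg: "(\<Sum>k<Suc m. nrm (of_int (qq k) * (- \<beta>))) = (\<Sum>k<Suc m. nrm (of_int (qq k) * \<beta>))"
  by (rule sum.cong) (simp_all only: mult_minus_right nrm_neg)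

lemma nrm_qq_c: "j < m \<Longrightarrow> k < Suc m \<Longrightarrow> nrm (of_int (qq k) * of_int (c j) / of_int (D j)) \<le> (if k = j then 1 / N else 0)"
proof -
  assume j: "j < m" and k: "k < Suc m"
  have Dj: "D j \<noteq> 0" using D_pos[OF j] by simp
  show ?thesis
  proof (cases "k = j")
    case True
    obtain v where v: "w j * (R j * c j) - 1 = D j * v" using w_dvd[OF j] by blast
    have "qq k * c j = 1 + D j * v" using v True j by (simp add: qq_def algebra_simps)
    then have "of_int (qq k) * of_int (c j) / of_int (D j) = 1 / of_int (D j) + (of_int v :: real)"
      using Dj by (simp add: field_simps flip: of_int_mult)
    then have "nrm (of_int (qq k) * of_int (c j) / of_int (D j)) = nrm (1 / of_int (D j))"
      by (simp only: nrm_shift)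
    also have "\<dots> \<le> 1 / of_int (D j)" using nrm_le_abs[of "1 / of_int (D j)"] D_pos[OF j] by simp
    also have "\<dots> \<le> 1 / N" using Dlo[OF j] N1 by (simp add: frac_le)
    finally show ?thesis using True by simp
  next
    case False
    have "D j dvd qq k"
    proof (cases "k < m")
      case True
      then show ?thesis using R_dvd[OF j True] False by (simp add: qq_def)
    next
      case False
      then show ?thesis using QR[OF j] by (simp add: qq_def)
    qed
    then have "D j dvd qq k * c j" by simp
    then have "of_int (qq k * c j) / of_int (D j) \<in> (\<int> :: real set)" using int_div_Ints Dj by blast
    then have "nrm (of_int (qq k) * of_int (c j) / of_int (D j)) = 0" by (simp add: nrm_int)
    then show ?thesis using False by simp
  qed
qed

lemma Lv_alpha: "j < m \<Longrightarrow> N * (\<Sum>k<Suc m. nrm (of_int (qq k) * \<alpha> j)) \<le> 2"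
proof -
  assume j: "j < m"
  have "(\<Sum>k<Suc m. nrm (of_int (qq k) * \<alpha> j)) \<le> (\<Sum>k<Suc m. (if k = j then 1 / N else 0) + of_int Q * \<bar>e j\<bar>)"
  proof (rule sum_mono)
    fix k assume k: "k \<in> {..<Suc m}"
    have "of_int (qq k) * \<alpha> j = of_int (qq k) * of_int (c j) / of_int (D j) + of_int (qq k) * e j"
      by (simp add: e_def algebra_simps)
    then have "nrm (of_int (qq k) * \<alpha> j) \<le> nrm (of_int (qq k) * of_int (c j) / of_int (D j)) + nrm (of_int (qq k) * e j)"
      using nrm_add by simp
    also have "\<dots> \<le> (if k = j then 1 / N else 0) + of_int Q * \<bar>e j\<bar>"
    proof (rule add_mono)
      show "nrm (of_int (qq k) * of_int (c j) / of_int (D j)) \<le> (if k = j then 1 / N else 0)"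
        using nrm_qq_c[OF j] k by simp
      have "nrm (of_int (qq k) * e j) \<le> \<bar>of_int (qq k)\<bar> * \<bar>e j\<bar>" using nrm_le_abs[of "of_int (qq k) * e j"] by (simp add: abs_mult)
      also have "\<dots> \<le> of_int Q * \<bar>e j\<bar>" using abs_qq[of k] k by (intro mult_right_mono) auto
      finally show "nrm (of_int (qq k) * e j) \<le> of_int Q * \<bar>e j\<bar>" .
    qed
    finally show "nrm (of_int (qq k) * \<alpha> j) \<le> (if k = j then 1 / N else 0) + of_int Q * \<bar>e j\<bar>" .
  qed
  also have "\<dots> = 1 / N + (real m + 1) * of_int Q * \<bar>e j\<bar>"
    using j by (simp add: sum.distrib)
  finally have "N * (\<Sum>k<Suc m. nrm (of_int (qq k) * \<alpha> j)) \<le> N * (1 / N + (real m + 1) * of_int Q * \<bar>e j\<bar>)"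
    using N1 by (simp add: mult_left_mono)
  also have "\<dots> = 1 + (real m + 1) * N * of_int Q * \<bar>e j\<bar>" using N1 by (simp add: field_simps)
  also have "\<dots> \<le> 2" using approx[OF j] unfolding e_def Q_def by simp
  finally show ?thesis .
qed

lemma N_pos: "0 < N" using N1 by simp

lemma NQ1: "1 \<le> N * of_int Q"
proof -
  have "1 \<le> Q" using Q_pos by simp
  then have "1 \<le> (of_int Q :: real)" by simp
  then show ?thesis using N1 by (metis mult_mono' one_le_numeral mult_1 order_trans zero_le_one)
qed

definition d0 where "d0 x y = max (cdist x y) (N * L x y / (real m + 2))"

lemma d0_tri: "d0 x z \<le> d0 x y + d0 y z"
proof -
  have a: "cdist x z \<le> cdist x y + cdist y z" by (rule cdist_tri)
  have "N * L x z \<le> N * (L x y + L y z)" by (rule mult_left_mono[OF L_tri]) (use N_pos in simp)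
  then have "N * L x z / (real m + 2) \<le> (N * L x y + N * L y z) / (real m + 2)"
    by (simp add: distrib_left divide_right_mono)
  then have b: "N * L x z / (real m + 2) \<le> N * L x y / (real m + 2) + N * L y z / (real m + 2)"
    by (simp only: add_divide_distrib)
  show ?thesis unfolding d0_def
  proof (rule max.boundedI)
    show "cdist x z \<le> max (cdist x y) (N * L x y / (real m + 2)) + max (cdist y z) (N * L y z / (real m + 2))"
      using a max.cobounded1[of "cdist x y"] max.cobounded1[of "cdist y z"] by linarith
    show "N * L x z / (real m + 2) \<le> max (cdist x y) (N * L x y / (real m + 2)) + max (cdist y z) (N * L y z / (real m + 2))"
      using b max.cobounded2[of "N * L x y / (real m + 2)"] max.cobounded2[of "N * L y z / (real m + 2)"] by linarith
  qed
qed

lemma d0_metric: "metric_on circle d0"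
  unfolding metric_on_def
proof (intro conjI ballI)
  fix x y assume x: "x \<in> circle" and y: "y \<in> circle"
  show "0 \<le> d0 x y" using cdist_ge0[of x y] unfolding d0_def by (rule max.coboundedI1)
  show "d0 x y = d0 y x" unfolding d0_def by (simp only: cdist_sym L_sym)
  show "(d0 x y = 0) = (x = y)"
  proof
    assume "d0 x y = 0"
    then have "cdist x y \<le> 0" unfolding d0_def by (metis max.cobounded1)
    then have "cdist x y = 0" using cdist_ge0[of x y] by linarith
    then show "x = y" using cdist_metric x y unfolding metric_on_def by blast
  next
    assume "x = y" then show "d0 x y = 0" by (simp add: d0_def cdist_self L_def nrm_def)
  qed
next
  fix x y z show "d0 x z \<le> d0 x y + d0 y z" by (rule d0_tri)
qed

lemma d0_lip: "d0 z z' \<le> N * of_int Q * cdist z z'"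
proof -
  have c0: "0 \<le> cdist z z'" by (rule cdist_ge0)
  have X0: "0 \<le> N * of_int Q * cdist z z'" using N_pos Q_pos c0 by simp
  have a: "cdist z z' \<le> N * of_int Q * cdist z z'" using mult_right_mono[OF NQ1 c0] by simp
  have "N * L z z' \<le> N * ((real m + 1) * of_int Q * cdist z z')"
    by (rule mult_left_mono[OF L_lip]) (use N_pos in simp)
  also have "\<dots> = (real m + 1) * (N * of_int Q * cdist z z')" by (simp only: mult_ac)
  also have "\<dots> \<le> (real m + 2) * (N * of_int Q * cdist z z')"
    by (rule mult_right_mono[OF _ X0]) simp
  finally have "N * L z z' / (real m + 2) \<le> N * of_int Q * cdist z z'"
    by (simp add: pos_divide_le_eq mult.commute)
  then show ?thesis using a unfolding d0_def by (rule max.boundedI[rotated])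
qed

lemma d0_jump_gen:
  assumes j: "j < m" and s: "(\<Sum>k<Suc m. nrm (of_int (qq k) * \<beta>)) = (\<Sum>k<Suc m. nrm (of_int (qq k) * \<alpha> j))"
  shows "d0 z (frac (z + \<beta>)) \<le> 1"
proof -
  have "N * L z (frac (z + \<beta>)) \<le> 2" unfolding Lv s by (rule Lv_alpha[OF j])
  then have h: "N * L z (frac (z + \<beta>)) / (real m + 2) \<le> 1" by (simp add: pos_divide_le_eq)
  have c: "cdist z (frac (z + \<beta>)) \<le> 1" using cdist_half[of z "frac (z + \<beta>)"] by linarith
  show ?thesis unfolding d0_def using c h by (rule max.boundedI)
qed

lemma adm0: "warp_admissible m \<alpha> (N * of_int Q) d0"
  unfolding warp_admissible_def
proof (intro conjI d0_metric)
  show "\<forall>z\<in>circle. \<forall>z'\<in>circle. d0 z z' \<le> N * of_int Q * cdist z z'"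
    using d0_lip by blast
  show "\<forall>z\<in>circle. \<forall>j<m. d0 z (frac (z + \<alpha> j)) \<le> 1 \<and> d0 z (frac (z - \<alpha> j)) \<le> 1"
  proof (intro ballI allI impI conjI)
    fix z j assume j: "j < m"
    show "d0 z (frac (z + \<alpha> j)) \<le> 1" by (rule d0_jump_gen[OF j refl])
    have "d0 z (frac (z + - \<alpha> j)) \<le> 1" by (rule d0_jump_gen[OF j Lv_neg])
    then show "d0 z (frac (z - \<alpha> j)) \<le> 1" by (simp only: diff_conv_add_uminus)
  qed
qed

lemma sum_split_j:
  fixes h :: "nat \<Rightarrow> 'b::comm_monoid_add"
  shows "j < m \<Longrightarrow> (\<Sum>k<m. h k) = h j + (\<Sum>k\<in>{..<m}-{j}. h k)"
  by (rule sum.remove) auto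

lemma a_dvd:
  assumes j: "j < m" and g: "\<And>j. j < m \<Longrightarrow> D j dvd (g j - w j * A0)"
  shows "D j dvd (A0 - (\<Sum>k<m. g k * R k * c k))"
proof -
  have o: "D j dvd (\<Sum>k\<in>{..<m}-{j}. g k * R k * c k)"
    by (rule dvd_sum) (use R_dvd[OF j] in auto)
  obtain r where r: "g j - w j * A0 = D j * r" using g[OF j] by blast
  obtain v where v: "w j * (R j * c j) - 1 = D j * v" using w_dvd[OF j] by blast
  have "A0 - g j * R j * c j = D j * (- r * R j * c j - A0 * v)"
  proof -
    have "g j = w j * A0 + D j * r" using r by simp
    then have "A0 - g j * R j * c j = A0 - A0 * (w j * (R j * c j)) - D j * r * R j * c j"
      by (simp add: algebra_simps)
    also have "w j * (R j * c j) = 1 + D j * v" using v by simp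
    finally show ?thesis by (simp add: algebra_simps)
  qed
  then have "D j dvd (A0 - g j * R j * c j)" by simp
  then have "D j dvd ((A0 - g j * R j * c j) - (\<Sum>k\<in>{..<m}-{j}. g k * R k * c k))" using o by (rule dvd_diff)
  then show ?thesis using sum_split_j[OF j, of "\<lambda>k. g k * R k * c k"] by (simp add: algebra_simps)
qed

lemma cD: "j < m \<Longrightarrow> of_int (g * R j * c j) / of_int Q = (of_int g :: real) * (of_int (c j) / of_int (D j))"
proof -
  assume j: "j < m"
  have "R j \<noteq> 0" using R_pos[of j] by simp
  moreover have "D j \<noteq> 0" using D_pos[OF j] by simp
  ultimately show ?thesis unfolding QR[OF j] by (simp add: field_simps)
qed

lemma upper:
  assumes adm: "warp_admissible m \<alpha> (N * of_int Q) \<delta>" and x: "x \<in> circle" and y: "y \<in> circle"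
  shows "\<delta> x y \<le> (2 * real m * P + 1) * N * L x y"
proof -
  define W where "W = y - x"
  define A0 where "A0 = round (of_int Q * W)"
  define \<sigma> where "\<sigma> = of_int Q * W - of_int A0"
  define g where "g j = w j * A0 - D j * round (of_int (w j * A0) / of_int (D j) :: real)" for j
  define a where "a = A0 - (\<Sum>j<m. g j * R j * c j)"
  have Qne: "(of_int Q :: real) \<noteq> 0" using Q_pos by simp
  have Qp: "(0::real) < of_int Q" using Q_pos by simp
  have gd: "D j dvd (g j - w j * A0)" if "j < m" for j
    unfolding g_def by simp
  have ad: "\<And>j. j < m \<Longrightarrow> D j dvd a" unfolding a_def by (rule a_dvd[OF _ gd])
  have "Q dvd a" unfolding Q_def by (rule prod_dvd_pairwise[OF cop ad order_refl])
  then obtain b where b: "a = Q * b" by blast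
  have s1: "(\<Sum>j<m. of_int (g j) * (of_int (c j) / of_int (D j))) = (of_int A0 - of_int a) / (of_int Q :: real)"
  proof -
    have "(of_int A0 - of_int a) / (of_int Q :: real) = (\<Sum>j<m. of_int (g j * R j * c j)) / of_int Q"
      by (simp add: a_def)
    also have "\<dots> = (\<Sum>j<m. of_int (g j * R j * c j) / of_int Q)" by (simp add: sum_divide_distrib)
    also have "\<dots> = (\<Sum>j<m. of_int (g j) * (of_int (c j) / of_int (D j)))"
      by (rule sum.cong[OF refl], rule cD) simp
    finally show ?thesis by simp
  qed
  have s2: "(\<Sum>j<m. of_int (g j) * \<alpha> j) = (\<Sum>j<m. of_int (g j) * (of_int (c j) / of_int (D j))) + (\<Sum>j<m. of_int (g j) * e j)"
    by (simp add: e_def sum.distrib[symmetric] algebra_simps)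
  define E where "E = (\<Sum>j<m. of_int (g j) * e j)"
  have key: "x + (\<Sum>j<m. of_int (g j) * \<alpha> j) - y = (of_int Q * E - \<sigma>) / of_int Q + of_int (- b)"
  proof -
    have "x + (\<Sum>j<m. of_int (g j) * \<alpha> j) - y = x + (of_int A0 - of_int Q * of_int b) / of_int Q + E - y"
      unfolding s2 s1 E_def b by simp
    also have "\<dots> = (of_int Q * E - \<sigma>) / of_int Q + of_int (- b)"
      using Qne unfolding \<sigma>_def W_def by (simp add: field_simps)
    finally show ?thesis .
  qed
  have nb: "nrm (x + (\<Sum>j<m. of_int (g j) * \<alpha> j) - y) \<le> (\<bar>of_int Q * E\<bar> + \<bar>\<sigma>\<bar>) / of_int Q"
  proof -
    have "nrm (x + (\<Sum>j<m. of_int (g j) * \<alpha> j) - y) = nrm ((of_int Q * E - \<sigma>) / of_int Q)"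
      unfolding key by (rule nrm_shift)
    also have "\<dots> \<le> \<bar>(of_int Q * E - \<sigma>) / of_int Q\<bar>" by (rule nrm_le_abs)
    also have "\<dots> = \<bar>of_int Q * E - \<sigma>\<bar> / of_int Q" using Qp by simp
    also have "\<dots> \<le> (\<bar>of_int Q * E\<bar> + \<bar>\<sigma>\<bar>) / of_int Q"
      using Qp by (intro divide_right_mono) auto
    finally show ?thesis .
  qed
  define G where "G = (\<Sum>j<m. \<bar>of_int (g j) :: real\<bar>)"
  have NQE: "N * \<bar>of_int Q * E\<bar> \<le> G"
  proof -
    have "N * \<bar>of_int Q * E\<bar> \<le> N * (\<Sum>j<m. \<bar>of_int (g j)\<bar> * (of_int Q * \<bar>e j\<bar>))"
    proof -
      have "\<bar>of_int Q * E\<bar> = \<bar>\<Sum>j<m. of_int (g j) * (of_int Q * e j)\<bar>"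
        unfolding E_def by (simp add: sum_distrib_left algebra_simps)
      also have "\<dots> \<le> (\<Sum>j<m. \<bar>of_int (g j) * (of_int Q * e j)\<bar>)" by (rule sum_abs)
      also have "\<dots> = (\<Sum>j<m. \<bar>of_int (g j)\<bar> * (of_int Q * \<bar>e j\<bar>))"
        using Qp by (simp add: abs_mult)
      finally show ?thesis using N_pos by (simp add: mult_left_mono)
    qed
    also have "\<dots> = (\<Sum>j<m. \<bar>of_int (g j)\<bar> * (N * of_int Q * \<bar>e j\<bar>))"
      by (simp add: sum_distrib_left algebra_simps)
    also have "\<dots> \<le> (\<Sum>j<m. \<bar>of_int (g j)\<bar> * 1)"
    proof (rule sum_mono)
      fix j assume j: "j \<in> {..<m}"
      have "(real m + 1) * (N * of_int Q * \<bar>e j\<bar>) \<le> 1" using approx[of j] j unfolding e_def Q_def by (simp add: algebra_simps)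
      moreover have "0 \<le> N * of_int Q * \<bar>e j\<bar>" using N_pos Qp by simp
      ultimately have "N * of_int Q * \<bar>e j\<bar> \<le> 1"
        by (smt (verit) mult_le_cancel_right1 of_nat_0_le_iff)
      then show "\<bar>of_int (g j)\<bar> * (N * of_int Q * \<bar>e j\<bar>) \<le> \<bar>of_int (g j)\<bar> * 1"
        by (rule mult_left_mono) simp
    qed
    finally show ?thesis unfolding G_def by simp
  qed
  have step1: "\<delta> x y \<le> 2 * G + N * \<bar>\<sigma>\<bar>"
  proof -
    have "\<delta> x y \<le> G + (N * of_int Q) * nrm (x + (\<Sum>j<m. of_int (g j) * \<alpha> j) - y)"
      unfolding G_def by (rule path_bound[OF adm x y])
    also have "(N * of_int Q) * nrm (x + (\<Sum>j<m. of_int (g j) * \<alpha> j) - y) \<le> (N * of_int Q) * ((\<bar>of_int Q * E\<bar> + \<bar>\<sigma>\<bar>) / of_int Q)"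
      by (rule mult_left_mono[OF nb]) (use N_pos Qp in simp)
    also have "(N * of_int Q) * ((\<bar>of_int Q * E\<bar> + \<bar>\<sigma>\<bar>) / of_int Q) = N * \<bar>of_int Q * E\<bar> + N * \<bar>\<sigma>\<bar>"
      using Qne by (simp add: field_simps)
    finally show ?thesis using NQE by simp
  qed
  define S where "S = (\<Sum>j<m. nrm (of_int (qq j) * W))"
  have sig: "\<bar>\<sigma>\<bar> = nrm (of_int Q * W)" unfolding \<sigma>_def A0_def nrm_def by simp
  have gb: "\<bar>of_int (g j)\<bar> \<le> P * N * (nrm (of_int (qq j) * W) + \<bar>\<sigma>\<bar>)" if j: "j < m" for j
  proof -
    define X where "X = of_int (w j * A0) / (of_int (D j) :: real)"
    have Dp: "(0::real) < of_int (D j)" using D_pos[OF j] by simp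
    have "of_int (g j) = of_int (D j) * (X - of_int (round X))"
      unfolding g_def X_def using Dp by (simp add: field_simps)
    then have ga: "\<bar>of_int (g j)\<bar> = of_int (D j) * nrm X" using Dp by (simp add: nrm_def abs_mult)
    have xe: "X = of_int (qq j) * W + (- (of_int (qq j) * \<sigma> / of_int Q))"
    proof -
      have "R j \<noteq> 0" using R_pos[of j] by simp
      then show ?thesis unfolding X_def \<sigma>_def qq_def using j Dp Qne unfolding QR[OF j]
        by (simp add: field_simps)
    qed
    have "nrm X \<le> nrm (of_int (qq j) * W) + nrm (- (of_int (qq j) * \<sigma> / of_int Q))"
      unfolding xe by (rule nrm_add)
    also have "nrm (- (of_int (qq j) * \<sigma> / of_int Q)) \<le> \<bar>\<sigma>\<bar>"
    proof -
      have "nrm (- (of_int (qq j) * \<sigma> / of_int Q)) \<le> \<bar>of_int (qq j) * \<sigma> / of_int Q\<bar>"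
        unfolding nrm_neg by (rule nrm_le_abs)
      also have "\<dots> = (\<bar>of_int (qq j)\<bar> / of_int Q) * \<bar>\<sigma>\<bar>" using Qp by (simp add: abs_mult)
      also have "\<dots> \<le> 1 * \<bar>\<sigma>\<bar>"
        using abs_qq[of j] j Qp by (intro mult_right_mono) (auto simp: divide_le_eq)
      finally show ?thesis by simp
    qed
    finally have nX: "nrm X \<le> nrm (of_int (qq j) * W) + \<bar>\<sigma>\<bar>" by simp
    have "\<bar>of_int (g j)\<bar> \<le> (P * N) * nrm X"
      unfolding ga by (rule mult_right_mono[OF Dhi[OF j] nrm_ge0])
    also have "\<dots> \<le> (P * N) * (nrm (of_int (qq j) * W) + \<bar>\<sigma>\<bar>)"
      by (rule mult_left_mono[OF nX]) (use P1 N_pos in simp)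
    finally show ?thesis .
  qed
  have Gb: "G \<le> P * N * (S + real m * \<bar>\<sigma>\<bar>)"
  proof -
    have "G \<le> (\<Sum>j<m. P * N * (nrm (of_int (qq j) * W) + \<bar>\<sigma>\<bar>))"
      unfolding G_def by (rule sum_mono) (use gb in auto)
    also have "\<dots> = P * N * (S + real m * \<bar>\<sigma>\<bar>)"
      unfolding S_def by (simp add: sum_distrib_left sum.distrib algebra_simps)
    finally show ?thesis .
  qed
  have Leq: "L x y = S + \<bar>\<sigma>\<bar>"
  proof -
    have "L x y = (\<Sum>k<Suc m. nrm (of_int (qq k) * W))"
      unfolding L_def W_def by (rule sum.cong) (auto, metis minus_diff_eq mult_minus_right nrm_neg)
    also have "\<dots> = S + nrm (of_int Q * W)" by (simp add: S_def qq_def)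
    finally show ?thesis using sig by simp
  qed
  have S0: "0 \<le> S" unfolding S_def by (rule sum_nonneg) (simp add: nrm_ge0)
  have "\<delta> x y \<le> 2 * (P * N * (S + real m * \<bar>\<sigma>\<bar>)) + N * \<bar>\<sigma>\<bar>" using step1 Gb by linarith
  also have "\<dots> \<le> (2 * real m * P + 1) * N * (S + \<bar>\<sigma>\<bar>)"
  proof -
    have "2 * P * N * S \<le> 2 * real m * P * N * S"
      using m1 P1 N_pos S0 by (intro mult_right_mono) (auto simp: mult_le_cancel_right1)
    moreover have "0 \<le> N * S" using N_pos S0 by simp
    ultimately show ?thesis by (simp add: algebra_simps)
  qed
  finally show ?thesis unfolding Leq .
qed

lemma cdist_f_y: "k < Suc m \<Longrightarrow> cdist v (f (frac X) k) = nrm (v - of_int (qq k) * X)"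
proof -
  assume k: "k < Suc m"
  have "v - f (frac X) k = (v - of_int (qq k) * X) + of_int (qq k * floor X + floor (of_int (qq k) * frac X))"
    using k by (simp add: f_def frac_def algebra_simps)
  then show ?thesis by (simp only: cdist_nrm nrm_shift)
qed

lemma cobounded:
  assumes yt: "y \<in> torus (Suc m)"
  shows "\<exists>x\<in>circle. N * torus_dist (Suc m) y (f x) \<le> real m + 1"
proof -
  define ym where "ym = y m"
  define b where "b j = floor (of_int (D j) * (y j - of_int (qq j) * ym / of_int Q))" for j
  define a where "a = (\<Sum>l<m. R l * c l * b l)"
  define X where "X = (of_int a + ym) / of_int Q"
  have Qne: "(of_int Q :: real) \<noteq> 0" using Q_pos by simp
  have each: "cdist (y k) (f (frac X) k) \<le> 1 / N" if k: "k < Suc m" for k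
  proof (cases "k < m")
    case False
    then have km: "k = m" using k by simp
    have "y k - of_int (qq k) * X = of_int (- a)" using km Qne by (simp add: qq_def X_def ym_def field_simps)
    then have "cdist (y k) (f (frac X) k) = nrm (of_int (- a))" using cdist_f_y[OF k] by (simp only:)
    then have "cdist (y k) (f (frac X) k) = 0" by (simp add: nrm_int)
    then show ?thesis using N_pos by simp
  next
    case True
    define j where "j = k"
    have j: "j < m" using True by (simp add: j_def)
    have Dp: "(0::real) < of_int (D j)" using D_pos[OF j] by simp
    have Rne: "(of_int (R j) :: real) \<noteq> 0" using R_pos[of j] by simp
    have "D j dvd (w j * a - b j)"
    proof -
      have o: "D j dvd (\<Sum>l\<in>{..<m}-{j}. w j * (R l * c l * b l))"
        by (rule dvd_sum) (use R_dvd[OF j] in auto)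
      have "w j * a - b j = (w j * (R j * c j) - 1) * b j + (\<Sum>l\<in>{..<m}-{j}. w j * (R l * c l * b l))"
        unfolding a_def sum_distrib_left sum_split_j[OF j, of "\<lambda>l. w j * (R l * c l * b l)"]
        by (simp add: algebra_simps)
      then show ?thesis using w_dvd[OF j] o by simp
    qed
    then obtain v where v: "w j * a - b j = D j * v" by blast
    define u where "u = y j - of_int (qq j) * ym / of_int Q"
    have fl: "of_int (b j) \<le> of_int (D j) * u" "of_int (D j) * u < of_int (b j) + 1"
      unfolding b_def u_def by linarith+
    have "of_int (qq j) * X = of_int (w j * a) / of_int (D j) + of_int (qq j) * ym / of_int Q"
      unfolding X_def qq_def using True Qne Dp Rne unfolding QR[OF j] j_def[symmetric]
      by (simp add: field_simps)
    also have "of_int (w j * a) / of_int (D j) = of_int (b j) / of_int (D j) + (of_int v :: real)"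
    proof -
      have "w j * a = b j + D j * v" using v by simp
      then show ?thesis using Dp by (simp add: field_simps flip: of_int_mult of_int_add)
    qed
    finally have "y k - of_int (qq k) * X = (u - of_int (b j) / of_int (D j)) + of_int (- v)"
      unfolding u_def j_def by simp
    then have "cdist (y k) (f (frac X) k) = nrm (u - of_int (b j) / of_int (D j))"
      using cdist_f_y[OF k] by (simp only: nrm_shift)
    also have "\<dots> \<le> \<bar>u - of_int (b j) / of_int (D j)\<bar>" by (rule nrm_le_abs)
    also have "\<dots> \<le> 1 / of_int (D j)"
    proof -
      have e1: "u - of_int (b j) / of_int (D j) = (of_int (D j) * u - of_int (b j)) / of_int (D j)"
        using Dp by (simp add: field_simps)
      have "0 \<le> u - of_int (b j) / of_int (D j)" unfolding e1 using fl(1) Dp by simp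
      moreover have "u - of_int (b j) / of_int (D j) < 1 / of_int (D j)" unfolding e1
        by (rule divide_strict_right_mono) (use fl(2) Dp in auto)
      ultimately show ?thesis by simp
    qed
    also have "\<dots> \<le> 1 / N" using Dlo[OF j] N1 by (simp add: frac_le)
    finally show ?thesis .
  qed
  have "torus_dist (Suc m) y (f (frac X)) \<le> (\<Sum>k<Suc m. cdist (y k) (f (frac X) k))" by (rule torus_le_sum)
  also have "\<dots> \<le> (\<Sum>k<Suc m. 1 / N)" by (rule sum_mono) (use each in auto)
  also have "\<dots> = (real m + 1) / N" by simp
  finally have td: "torus_dist (Suc m) y (f (frac X)) \<le> (real m + 1) / N" .
  have "N * torus_dist (Suc m) y (f (frac X)) \<le> N * ((real m + 1) / N)"
    by (rule mult_left_mono[OF td]) (use N_pos in simp)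
  also have "\<dots> = real m + 1" using N_pos by simp
  finally show ?thesis using frac_circle by blast
qed

end

lemma W_upper:
  assumes "warp_admissible m \<alpha> t \<delta>" "x \<in> circle" "y \<in> circle"
  shows "\<delta> x y \<le> warped_dist m \<alpha> t x y"
  unfolding warped_dist_def
proof (rule cSup_upper)
  show "\<delta> x y \<in> {\<delta> x y |\<delta>. warp_admissible m \<alpha> t \<delta>}" using assms by blast
  show "bdd_above {\<delta> x y |\<delta>. warp_admissible m \<alpha> t \<delta>}"
    by (rule bdd_aboveI[of _ "t * cdist x y"]) (use assms in \<open>auto simp: warp_admissible_def\<close>)
qed

lemma W_least:
  assumes "warp_admissible m \<alpha> t \<delta>0" "\<And>\<delta>. warp_admissible m \<alpha> t \<delta> \<Longrightarrow> \<delta> x y \<le> B"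
  shows "warped_dist m \<alpha> t x y \<le> B"
  unfolding warped_dist_def
  by (rule cSup_least) (use assms in auto)

lemma cdist_adm:
  assumes t: "1 \<le> t" shows "warp_admissible m \<alpha> t cdist"
  unfolding warp_admissible_def
proof (intro conjI cdist_metric)
  show "\<forall>z\<in>circle. \<forall>z'\<in>circle. cdist z z' \<le> t * cdist z z'"
  proof (intro ballI)
    fix z z'
    show "cdist z z' \<le> t * cdist z z'" using mult_right_mono[OF t cdist_ge0[of z z']] by simp
  qed
  show "\<forall>z\<in>circle. \<forall>j<m. cdist z (frac (z + \<alpha> j)) \<le> 1 \<and> cdist z (frac (z - \<alpha> j)) \<le> 1"
  proof (intro ballI allI impI conjI)
    fix z j
    show "cdist z (frac (z + \<alpha> j)) \<le> 1" using cdist_half[of z "frac (z + \<alpha> j)"] by linarith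
    show "cdist z (frac (z - \<alpha> j)) \<le> 1" using cdist_half[of z "frac (z - \<alpha> j)"] by linarith
  qed
qed

context level begin

theorem level_qi:
  assumes C1: "(2 * real m * P + 1) * (real m + 1) \<le> C" and C2: "real m + 2 \<le> C"
  shows "\<exists>f. (\<forall>x\<in>circle. f x \<in> torus (Suc m)) \<and>
     (\<forall>x\<in>circle. \<forall>x'\<in>circle. warped_dist m \<alpha> (N * of_int Q) x x' / C - (real m + 1) \<le> N * torus_dist (Suc m) (f x) (f x') \<and>
        N * torus_dist (Suc m) (f x) (f x') \<le> C * warped_dist m \<alpha> (N * of_int Q) x x' + (real m + 1)) \<and>
     (\<forall>y\<in>torus (Suc m). \<exists>x\<in>circle. N * torus_dist (Suc m) y (f x) \<le> real m + 1)"
proof (intro exI conjI ballI)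
  fix x assume "x \<in> circle" then show "f x \<in> torus (Suc m)" by (rule f_torus[of x, THEN mp[OF impI]])
next
  fix y assume "y \<in> torus (Suc m)" then show "\<exists>x\<in>circle. N * torus_dist (Suc m) y (f x) \<le> real m + 1"
    by (rule cobounded)
next
  fix x x' assume x: "x \<in> circle" and x': "x' \<in> circle"
  define Wd where "Wd = warped_dist m \<alpha> (N * of_int Q) x x'"
  define T where "T = torus_dist (Suc m) (f x) (f x')"
  have Cp: "0 < C" using C2 by simp
  have d0W: "d0 x x' \<le> Wd" unfolding Wd_def by (rule W_upper[OF adm0 x x'])
  have "N * L x x' / (real m + 2) \<le> d0 x x'" unfolding d0_def by simp
  then have l1: "N * L x x' \<le> (real m + 2) * d0 x x'" by (simp add: pos_divide_le_eq mult.commute)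
  have "(real m + 2) * d0 x x' \<le> (real m + 2) * Wd" by (rule mult_left_mono[OF d0W]) simp
  then have lo: "N * L x x' \<le> (real m + 2) * Wd" using l1 by linarith
  have W0: "0 \<le> Wd" using d0W cdist_ge0[of x x'] unfolding d0_def by linarith
  have hi: "Wd \<le> (2 * real m * P + 1) * N * L x x'"
    unfolding Wd_def by (rule W_least[OF cdist_adm[OF NQ1]], rule upper[OF _ x x'])
  have T0: "0 \<le> T" unfolding T_def torus_dist_def by (intro real_sqrt_ge_zero sum_nonneg) simp
  have TL: "T \<le> L x x'" unfolding T_def by (rule td_le_L)
  have LT: "L x x' \<le> (real m + 1) * T" unfolding T_def by (rule L_le_td)
  have "N * T \<le> N * L x x'" by (rule mult_left_mono[OF TL]) (use N_pos in simp)
  also have "\<dots> \<le> (real m + 2) * Wd" by (rule lo)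
  also have "\<dots> \<le> C * Wd" by (rule mult_right_mono[OF C2 W0])
  finally show "N * torus_dist (Suc m) (f x) (f x') \<le> C * warped_dist m \<alpha> (N * of_int Q) x x' + (real m + 1)"
    unfolding T_def[symmetric] Wd_def[symmetric] by simp
  have K0: "0 \<le> 2 * real m * P + 1" using P1 by simp
  have "Wd \<le> (2 * real m * P + 1) * N * L x x'" by (rule hi)
  also have "\<dots> = (2 * real m * P + 1) * (N * L x x')" by simp
  also have "\<dots> \<le> (2 * real m * P + 1) * (N * ((real m + 1) * T))"
    using LT N_pos K0 by (intro mult_left_mono) auto
  also have "\<dots> = ((2 * real m * P + 1) * (real m + 1)) * (N * T)" by (simp add: algebra_simps)
  also have "\<dots> \<le> C * (N * T)" by (rule mult_right_mono[OF C1]) (use N_pos T0 in simp)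
  finally have "Wd / C \<le> N * T" using Cp by (simp add: pos_divide_le_eq mult.commute)
  then show "warped_dist m \<alpha> (N * of_int Q) x x' / C - (real m + 1) \<le> N * torus_dist (Suc m) (f x) (f x')"
    unfolding T_def[symmetric] Wd_def[symmetric] by simp
qed

end



lemma geo_tail:
  fixes NN :: "nat \<Rightarrow> nat"
  assumes pos: "\<And>i. 1 \<le> NN i" and dbl: "\<And>i. 2 * NN i \<le> NN (Suc i)"
  shows "summable (\<lambda>n. 1 / real (NN (n + a))) \<and> (\<Sum>n. 1 / real (NN (n + a))) \<le> 2 / real (NN a)"
proof -
  have g: "2 ^ n * NN a \<le> NN (n + a)" for n
  proof (induction n)
    case 0 then show ?case by simp
  next
    case (Suc n)
    have "2 ^ Suc n * NN a = 2 * (2 ^ n * NN a)" by simp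
    also have "\<dots> \<le> 2 * NN (n + a)" using Suc by simp
    also have "\<dots> \<le> NN (Suc n + a)" using dbl[of "n + a"] by simp
    finally show ?case .
  qed
  have b: "1 / real (NN (n + a)) \<le> (1 / real (NN a)) * (1/2) ^ n" for n
  proof -
    have p1: "(0::real) < real (NN a)" using pos[of a] by simp
    have "real (2 ^ n * NN a) \<le> real (NN (n + a))" using g[of n] by (simp only: of_nat_le_iff)
    then have "2 ^ n * real (NN a) \<le> real (NN (n + a))" by simp
    moreover have "0 < 2 ^ n * real (NN a)" using p1 by simp
    ultimately have "1 / real (NN (n + a)) \<le> 1 / (2 ^ n * real (NN a))"
      by (intro frac_le[of 1 1 "2 ^ n * real (NN a)" "real (NN (n + a))"]) auto
    also have "\<dots> = (1 / real (NN a)) * (1/2) ^ n" by (simp add: power_one_over)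
    finally show ?thesis .
  qed
  have sg: "summable (\<lambda>n. (1 / real (NN a)) * (1/2::real) ^ n)"
    by (rule summable_mult) (rule summable_geometric, simp)
  have s: "summable (\<lambda>n. 1 / real (NN (n + a)))"
    by (rule summable_comparison_test'[OF sg, of 0]) (use b in auto)
  have "(\<Sum>n. 1 / real (NN (n + a))) \<le> (\<Sum>n. (1 / real (NN a)) * (1/2::real) ^ n)"
    by (rule suminf_le[OF b s sg])
  also have "\<dots> = (1 / real (NN a)) * (\<Sum>n. (1/2::real) ^ n)"
    by (rule suminf_mult) (rule summable_geometric, simp)
  also have "(\<Sum>n. (1/2::real) ^ n) = 2" using suminf_geometric[of "1/2::real"] by simp
  finally have "(\<Sum>n. 1 / real (NN (n + a))) \<le> 1 / real (NN a) * 2" .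
  then show ?thesis using s by simp
qed

locale constr =
  fixes m :: nat and p :: "nat \<Rightarrow> nat"
  assumes m1: "1 \<le> m" and pprime: "\<And>j. prime (p j)" and pinj: "\<And>j k. p j = p k \<Longrightarrow> j = k"
begin

definition P0 where "P0 = (\<Prod>j<m. p j)"

lemma p2: "2 \<le> p j" using pprime[of j] prime_ge_2_nat by blast

lemma P0_pos: "1 \<le> P0" unfolding P0_def by (rule prod_ge_1) (use p2 in \<open>auto intro: order.trans[OF _ p2]\<close>)

lemma p_le_P0: "j < m \<Longrightarrow> p j \<le> P0"
proof -
  assume "j < m"
  then have "p j dvd P0" unfolding P0_def by (intro dvd_prodI) auto
  then show ?thesis using P0_pos by (intro dvd_imp_le) auto
qed

fun NN :: "nat \<Rightarrow> nat" where
  "NN 0 = 8 * P0"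
| "NN (Suc i) = 4 * (m + 1) * P0 ^ (m + 1) * NN i ^ (m + 1)"

lemma NN_pos: "1 \<le> NN i"
proof (induction i)
  case 0 then show ?case using P0_pos by simp
next
  case (Suc i)
  then show ?case using P0_pos by simp
qed

lemma NN_big: "8 * P0 * NN i \<le> NN (Suc i)"
proof -
  have a: "P0 \<le> P0 ^ (m + 1)" using P0_pos by (simp add: self_le_power)
  have b: "NN i \<le> NN i ^ (m + 1)" using NN_pos[of i] by (simp add: self_le_power)
  have c: "8 \<le> 4 * (m + 1)" using m1 by simp
  have "8 * P0 * NN i \<le> (4 * (m + 1)) * P0 ^ (m + 1) * NN i ^ (m + 1)"
    using a b c by (intro mult_mono) auto
  then show ?thesis by simp
qed

lemma NN_dbl: "2 * NN i \<le> NN (Suc i)"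
proof -
  have "2 * NN i \<le> (8 * P0) * NN i" using P0_pos by (intro mult_le_mono1) simp
  then show ?thesis by (rule le_trans[OF _ NN_big])
qed

lemma NN_less: "P0 * NN i < NN (Suc i)"
proof -
  have "P0 * NN i < 8 * P0 * NN i" using P0_pos NN_pos[of i] by simp
  then show ?thesis by (rule less_le_trans[OF _ NN_big])
qed

lemma NN_mono: "strict_mono NN"
  unfolding strict_mono_Suc_iff
proof
  fix i
  have "NN i \<le> P0 * NN i" using P0_pos by simp
  then show "NN i < NN (Suc i)" by (rule le_less_trans[OF _ NN_less])
qed

lemma geo: "summable (\<lambda>n. 1 / real (NN (n + a))) \<and> (\<Sum>n. 1 / real (NN (n + a))) \<le> 2 / real (NN a)"
  by (rule geo_tail[of NN, OF NN_pos NN_dbl])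

definition kk where "kk i j = (LEAST k. NN i \<le> p j ^ k)"
definition D where "D i j = p j ^ kk i j"

lemma kk_ex: "\<exists>k. NN i \<le> p j ^ k"
proof -
  have "NN i < 2 ^ NN i" by (rule less_exp)
  also have "\<dots> \<le> p j ^ NN i" using p2[of j] by (rule power_mono) simp
  finally show ?thesis by (intro exI[of _ "NN i"]) simp
qed

lemma D_ge: "NN i \<le> D i j"
  unfolding D_def kk_def by (rule LeastI_ex[OF kk_ex])

lemma D_le: "D i j \<le> p j * NN i"
proof (cases "kk i j")
  case 0
  then show ?thesis using NN_pos[of i] p2[of j] by (simp add: D_def)
next
  case (Suc k)
  have "\<not> NN i \<le> p j ^ k"
  proof
    assume "NN i \<le> p j ^ k"
    then have "kk i j \<le> k" unfolding kk_def by (rule Least_le)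
    then show False using Suc by simp
  qed
  then have "p j ^ k < NN i" by simp
  then have "p j * p j ^ k \<le> p j * NN i" by simp
  then show ?thesis using Suc by (simp add: D_def)
qed

lemma D_le_P0: "j < m \<Longrightarrow> D i j \<le> P0 * NN i"
  using D_le[of i j] p_le_P0[of j] by (meson le_trans mult_le_mono1)

lemma kk_less: "j < m \<Longrightarrow> kk i j < kk (Suc i) j"
proof -
  assume j: "j < m"
  have "p j ^ kk i j < p j ^ kk (Suc i) j"
    using D_le_P0[OF j, of i] NN_less[of i] D_ge[of "Suc i" j] unfolding D_def by linarith
  then show ?thesis using p2[of j] by simp
qed

lemma kk_mono: "j < m \<Longrightarrow> strict_mono (\<lambda>i. kk i j)"
  unfolding strict_mono_Suc_iff using kk_less by blast

lemma kk_le: "j < m \<Longrightarrow> l \<le> i \<Longrightarrow> kk l j \<le> kk i j"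
  using strict_mono_less_eq[OF kk_mono] by auto

lemma kk_lt: "j < m \<Longrightarrow> l < i \<Longrightarrow> kk l j < kk i j"
  using strict_mono_less[OF kk_mono] by auto

definition bb where "bb s l j = 1 + (if l \<in> s then p j else 0)"
definition tm where "tm s j l = real (bb s l j) / real (D l j)"
definition al where "al s j = (if j < m then (\<Sum>l. tm s j l) else 0)"
definition cc where "cc s i j = (\<Sum>l<Suc i. bb s l j * p j ^ (kk i j - kk l j))"
definition Q where "Q i = (\<Prod>j<m. D i j)"

lemma D_pos: "1 \<le> D i j" using D_ge[of i j] NN_pos[of i] by simp

lemma tm_bound: "j < m \<Longrightarrow> 0 < tm s j l \<and> tm s j l \<le> 2 * real P0 * (1 / real (NN l))"
proof -
  assume j: "j < m"
  have b1: "1 \<le> bb s l j" by (simp add: bb_def)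
  have b2: "bb s l j \<le> 2 * P0" using p_le_P0[OF j] P0_pos by (simp add: bb_def)
  have "0 < tm s j l" using b1 D_pos[of l j] by (simp add: tm_def)
  moreover have "tm s j l \<le> real (2 * P0) / real (NN l)"
    unfolding tm_def using b1 b2 D_ge[of l j] NN_pos[of l]
    by (intro frac_le) auto
  ultimately show ?thesis by simp
qed

lemma tm_summable: "j < m \<Longrightarrow> summable (tm s j)"
proof -
  assume j: "j < m"
  have "summable (\<lambda>l. 2 * real P0 * (1 / real (NN l)))"
    using geo[of 0] by (intro summable_mult) (simp only: add_0_right)
  then show ?thesis
    by (rule summable_comparison_test'[of _ 0]) (use tm_bound[OF j] in \<open>auto simp: less_imp_le\<close>)
qed

lemma partial: "j < m \<Longrightarrow> (\<Sum>l<Suc i. tm s j l) = real (cc s i j) / real (D i j)"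
proof -
  assume j: "j < m"
  have pp: "(0::real) < real (p j)" using p2[of j] by simp
  have "real (cc s i j) / real (D i j) = (\<Sum>l<Suc i. real (bb s l j) * real (p j) ^ (kk i j - kk l j)) / real (p j) ^ kk i j"
    unfolding cc_def D_def by (simp only: of_nat_sum of_nat_mult of_nat_power)
  also have "\<dots> = (\<Sum>l<Suc i. real (bb s l j) * real (p j) ^ (kk i j - kk l j) / real (p j) ^ kk i j)"
    by (rule sum_divide_distrib)
  also have "\<dots> = (\<Sum>l<Suc i. tm s j l)"
  proof (rule sum.cong[OF refl])
    fix l assume "l \<in> {..<Suc i}"
    then have le: "kk l j \<le> kk i j" using kk_le[OF j] by simp
    have "real (p j) ^ kk i j = real (p j) ^ (kk i j - kk l j) * real (p j) ^ kk l j"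
      using le by (simp add: power_add[symmetric])
    then show "real (bb s l j) * real (p j) ^ (kk i j - kk l j) / real (p j) ^ kk i j = tm s j l"
      using pp by (simp add: tm_def D_def)
  qed
  finally show ?thesis by simp
qed

lemma tail: "j < m \<Longrightarrow> al s j = real (cc s i j) / real (D i j) + (\<Sum>n. tm s j (n + Suc i))
   \<and> 0 \<le> (\<Sum>n. tm s j (n + Suc i)) \<and> (\<Sum>n. tm s j (n + Suc i)) \<le> 4 * real P0 / real (NN (Suc i))"
proof -
  assume j: "j < m"
  have sm: "summable (tm s j)" by (rule tm_summable[OF j])
  have sp: "summable (\<lambda>n. tm s j (n + Suc i))" using sm by (rule summable_ignore_initial_segment)
  have e: "al s j = (\<Sum>n. tm s j (n + Suc i)) + (\<Sum>l<Suc i. tm s j l)"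
    using j suminf_split_initial_segment[OF sm, of "Suc i"] by (simp add: al_def)
  have g: "summable (\<lambda>n. 1 / real (NN (n + Suc i)))" "(\<Sum>n. 1 / real (NN (n + Suc i))) \<le> 2 / real (NN (Suc i))"
    using geo[of "Suc i"] by auto
  have "(\<Sum>n. tm s j (n + Suc i)) \<le> (\<Sum>n. 2 * real P0 * (1 / real (NN (n + Suc i))))"
    by (rule suminf_le[OF _ sp summable_mult[OF g(1)]]) (rule tm_bound[OF j, THEN conjunct2])
  also have "\<dots> = 2 * real P0 * (\<Sum>n. 1 / real (NN (n + Suc i)))" by (rule suminf_mult[OF g(1)])
  also have "\<dots> \<le> 2 * real P0 * (2 / real (NN (Suc i)))" using g(2) by (intro mult_left_mono) auto
  finally have up: "(\<Sum>n. tm s j (n + Suc i)) \<le> 4 * real P0 / real (NN (Suc i))" by simp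
  have lo: "0 \<le> (\<Sum>n. tm s j (n + Suc i))"
    by (rule suminf_nonneg[OF sp]) (use tm_bound[OF j] in \<open>auto simp: less_imp_le\<close>)
  show ?thesis using e up lo partial[OF j, of s i] by simp
qed

lemma al_range: "j < m \<Longrightarrow> 0 < al s j \<and> al s j < 1"
proof -
  assume j: "j < m"
  have sm: "summable (tm s j)" by (rule tm_summable[OF j])
  have pos: "0 < al s j" using j suminf_pos[OF sm] tm_bound[OF j] by (simp add: al_def)
  have g: "summable (\<lambda>n. 1 / real (NN n))" "(\<Sum>n. 1 / real (NN n)) \<le> 2 / real (NN 0)"
    using geo[of 0] by (simp_all only: add_0_right)
  have "(\<Sum>l. tm s j l) \<le> (\<Sum>n. 2 * real P0 * (1 / real (NN n)))"
    by (rule suminf_le[OF _ sm summable_mult[OF g(1)]]) (rule tm_bound[OF j, THEN conjunct2])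
  also have "\<dots> = 2 * real P0 * (\<Sum>n. 1 / real (NN n))" by (rule suminf_mult[OF g(1)])
  also have "\<dots> \<le> 2 * real P0 * (2 / real (NN 0))" using g(2) by (intro mult_left_mono) auto
  also have "\<dots> = 1 / 2" using P0_pos by simp
  finally show ?thesis using pos j by (simp add: al_def)
qed

lemma cc_not_dvd: "j < m \<Longrightarrow> \<not> p j dvd cc s i j"
proof
  assume j: "j < m" and d: "p j dvd cc s i j"
  define A where "A = (\<Sum>l<i. bb s l j * p j ^ (kk i j - kk l j))"
  have dA: "p j dvd A" unfolding A_def
  proof (rule dvd_sum)
    fix l assume "l \<in> {..<i}"
    then have "kk l j < kk i j" using kk_lt[OF j] by simp
    then have "p j dvd p j ^ (kk i j - kk l j)" by (simp add: dvd_power)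
    then show "p j dvd bb s l j * p j ^ (kk i j - kk l j)" by simp
  qed
  define X where "X = A + (if i \<in> s then p j else 0)"
  have ceq: "cc s i j = X + 1" by (simp add: cc_def A_def bb_def X_def)
  have d1: "p j dvd X + 1" using d unfolding ceq .
  have "p j dvd X" using dA by (simp add: X_def)
  then have "p j dvd 1" using d1 by (simp only: dvd_add_right_iff)
  then show False using p2[of j] by simp
qed

lemma cop_cc: "j < m \<Longrightarrow> coprime (int (cc s i j)) (int (D i j))"
proof -
  assume j: "j < m"
  have "coprime (p j) (cc s i j)" using prime_imp_coprime[OF pprime cc_not_dvd[OF j]] .
  then have "coprime (cc s i j) (D i j)" by (simp add: D_def coprime_commute)
  then show ?thesis by simp
qed

lemma cop_D: "j < m \<Longrightarrow> k < m \<Longrightarrow> j \<noteq> k \<Longrightarrow> coprime (int (D i j)) (int (D i k))"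
proof -
  assume "j < m" "k < m" "j \<noteq> k"
  then have "p j \<noteq> p k" using pinj by blast
  then have "coprime (p j) (p k)" using primes_coprime pprime by blast
  then have "coprime (D i j) (D i k)" by (simp add: D_def)
  then show ?thesis by simp
qed

lemma Q_le: "real (Q i) \<le> (real P0 * real (NN i)) ^ m"
proof -
  have "Q i \<le> (\<Prod>j<m. P0 * NN i)" unfolding Q_def by (rule prod_mono) (use D_le_P0 in auto)
  then have "Q i \<le> (P0 * NN i) ^ m" by simp
  then have "real (Q i) \<le> real ((P0 * NN i) ^ m)" by (simp only: of_nat_le_iff)
  then show ?thesis by simp
qed

lemma Q_ge: "j < m \<Longrightarrow> D i j \<le> Q i"
proof -
  assume j: "j < m"
  have "D i j dvd Q i" unfolding Q_def using j by (intro dvd_prodI) auto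
  moreover have "0 < Q i" unfolding Q_def by (rule prod_pos) (use D_pos in \<open>auto intro: less_le_trans[OF zero_less_one]\<close>)
  ultimately show ?thesis by (rule dvd_imp_le)
qed

lemma Q_mono: "Q i \<le> Q (Suc i)"
  unfolding Q_def
proof (rule prod_mono)
  fix j assume "j \<in> {..<m}"
  then have "kk i j \<le> kk (Suc i) j" using kk_le by simp
  then have "D i j \<le> D (Suc i) j" unfolding D_def using p2[of j] by (simp add: power_increasing)
  then show "0 \<le> D i j \<and> D i j \<le> D (Suc i) j" by simp
qed

lemma approx_main: "j < m \<Longrightarrow> (real m + 1) * real (NN i) * real (Q i) * \<bar>al s j - real (cc s i j) / real (D i j)\<bar> \<le> 1"
proof -
  assume j: "j < m"
  define T where "T = (\<Sum>n. tm s j (n + Suc i))"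
  have T: "al s j - real (cc s i j) / real (D i j) = T" "0 \<le> T" "T \<le> 4 * real P0 / real (NN (Suc i))"
    using tail[OF j, of s i] unfolding T_def by auto
  have c0: "0 \<le> (real m + 1) * real (NN i)" by simp
  have "(real m + 1) * real (NN i) * real (Q i) * T \<le> (real m + 1) * real (NN i) * (real P0 * real (NN i)) ^ m * (4 * real P0 / real (NN (Suc i)))"
    using Q_le[of i] T(2,3) c0 by (intro mult_mono) auto
  also have "\<dots> = ((real m + 1) * real (NN i) * (real P0 * real (NN i)) ^ m * 4 * real P0) / real (NN (Suc i))"
    by simp
  also have "(real m + 1) * real (NN i) * (real P0 * real (NN i)) ^ m * 4 * real P0 = real (NN (Suc i))"
    by (simp add: power_mult_distrib algebra_simps)
  also have "real (NN (Suc i)) / real (NN (Suc i)) = 1" using NN_pos[of "Suc i"] by simp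
  finally show ?thesis using T(1) T(2) by simp
qed

lemma cc_diff: "(\<forall>l<i. (l \<in> s) = (l \<in> s')) \<Longrightarrow>
  real (cc s i j) - real (cc s' i j) = real (bb s i j) - real (bb s' i j)"
proof -
  assume h: "\<forall>l<i. (l \<in> s) = (l \<in> s')"
  have "(\<Sum>l<i. bb s l j * p j ^ (kk i j - kk l j)) = (\<Sum>l<i. bb s' l j * p j ^ (kk i j - kk l j))"
    by (rule sum.cong[OF refl]) (use h in \<open>simp add: bb_def\<close>)
  then show ?thesis by (simp add: cc_def)
qed

lemma close: "j < m \<Longrightarrow> 2 * real (D i j) * \<bar>al s j - real (cc s i j) / real (D i j)\<bar> \<le> 1"
proof -
  assume j: "j < m"
  have "2 * real (D i j) \<le> (real m + 1) * real (NN i) * real (Q i)"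
  proof -
    have "2 * real (D i j) \<le> 2 * real (Q i)" using Q_ge[OF j, of i] by simp
    also have "\<dots> \<le> ((real m + 1) * real (NN i)) * real (Q i)"
    proof (rule mult_right_mono)
      have "2 * 1 \<le> (real m + 1) * real (NN i)" using m1 NN_pos[of i] by (intro mult_mono) auto
      then show "2 \<le> (real m + 1) * real (NN i)" by simp
    qed simp
    finally show ?thesis by simp
  qed
  then have "2 * real (D i j) * \<bar>al s j - real (cc s i j) / real (D i j)\<bar> \<le> (real m + 1) * real (NN i) * real (Q i) * \<bar>al s j - real (cc s i j) / real (D i j)\<bar>"
    by (rule mult_right_mono) simp
  also have "\<dots> \<le> 1" by (rule approx_main[OF j])
  finally show ?thesis .
qed

lemma al_inj: "inj al"
proof (rule injI, rule ccontr)
  fix s s' assume eq: "al s = al s'" and ne: "s \<noteq> s'"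
  have "\<exists>l. (l \<in> s) \<noteq> (l \<in> s')" using ne by blast
  define i where "i = (LEAST l. (l \<in> s) \<noteq> (l \<in> s'))"
  have i: "(i \<in> s) \<noteq> (i \<in> s')" unfolding i_def by (rule LeastI_ex) (use ne in blast)
  have below: "\<forall>l<i. (l \<in> s) = (l \<in> s')" unfolding i_def using not_less_Least by blast
  have m0: "0 < m" using m1 by simp
  define d where "d = real (D i 0)"
  have dp: "0 < d" using D_pos[of i 0] by (simp add: d_def)
  have "\<bar>real (bb s i 0) - real (bb s' i 0)\<bar> = real (p 0)" using i by (auto simp: bb_def)
  then have cd: "\<bar>real (cc s i 0) - real (cc s' i 0)\<bar> = real (p 0)" using cc_diff[OF below] by simp
  have c1: "2 * d * \<bar>al s 0 - real (cc s i 0) / d\<bar> \<le> 1" using close[OF m0, of i s] by (simp add: d_def)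
  have c2: "2 * d * \<bar>al s 0 - real (cc s' i 0) / d\<bar> \<le> 1" using close[OF m0, of i s'] eq by (simp add: d_def)
  have "2 * d * \<bar>real (cc s i 0) / d - real (cc s' i 0) / d\<bar> \<le> 2 * d * \<bar>al s 0 - real (cc s i 0) / d\<bar> + 2 * d * \<bar>al s 0 - real (cc s' i 0) / d\<bar>"
  proof -
    have "\<bar>real (cc s i 0) / d - real (cc s' i 0) / d\<bar> \<le> \<bar>al s 0 - real (cc s i 0) / d\<bar> + \<bar>al s 0 - real (cc s' i 0) / d\<bar>"
      by linarith
    then show ?thesis using dp by (simp add: distrib_left[symmetric] mult_left_mono)
  qed
  also have "\<dots> \<le> 2" using c1 c2 by simp
  finally have le2: "2 * d * \<bar>real (cc s i 0) / d - real (cc s' i 0) / d\<bar> \<le> 2" .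
  have "2 * d * \<bar>real (cc s i 0) / d - real (cc s' i 0) / d\<bar> = 2 * \<bar>real (cc s i 0) - real (cc s' i 0)\<bar>"
    using dp by (simp add: diff_divide_distrib[symmetric] abs_mult)
  also have "\<dots> = 2 * real (p 0)" using cd by simp
  finally have "2 * real (p 0) \<le> 2" using le2 by simp
  then show False using p2[of 0] by simp
qed

lemma unc_natset: "uncountable (UNIV :: nat set set)"
proof
  assume "countable (UNIV :: nat set set)"
  then obtain f :: "nat \<Rightarrow> nat set" where f: "range f = UNIV" by (metis UNIV_not_empty uncountable_def)
  then obtain k where "f k = {n. n \<notin> f n}" by (metis UNIV_I rangeE)
  then show False by blast
qed

theorem main:
  "\<exists>t \<tau> :: nat \<Rightarrow> nat. strict_mono t \<and> strict_mono \<tau> \<and>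
     (\<exists>S. uncountable S \<and>
        S \<subseteq> {\<alpha> :: nat \<Rightarrow> real. (\<forall>j<m. 0 < \<alpha> j \<and> \<alpha> j < 1) \<and> (\<forall>j\<ge>m. \<alpha> j = 0)} \<and>
        (\<forall>\<alpha>\<in>S. qi_families (\<lambda>i. circle) (\<lambda>i. warped_dist m \<alpha> (real (t i)))
                             (\<lambda>i. torus (Suc m)) (\<lambda>i x y. real (\<tau> i) * torus_dist (Suc m) x y)))"
proof (intro exI conjI)
  show "strict_mono (\<lambda>i. NN i * Q i)"
    unfolding strict_mono_Suc_iff
  proof
    fix i
    have "0 < Q i" using Q_ge[of 0 i] D_pos[of i 0] m1 by simp
    then show "NN i * Q i < NN (Suc i) * Q (Suc i)"
      using strict_monoD[OF NN_mono, of i "Suc i"] Q_mono[of i] by (intro mult_less_le_imp_less) auto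
  qed
  show "strict_mono NN" by (rule NN_mono)
  show "uncountable (range al)"
  proof
    assume "countable (range al)"
    then have "countable (UNIV :: nat set set)" using al_inj by (rule countable_image_inj_on)
    then show False using unc_natset by simp
  qed
  show "range al \<subseteq> {\<alpha> :: nat \<Rightarrow> real. (\<forall>j<m. 0 < \<alpha> j \<and> \<alpha> j < 1) \<and> (\<forall>j\<ge>m. \<alpha> j = 0)}"
    using al_range by (auto simp: al_def)
  show "\<forall>\<alpha>\<in>range al. qi_families (\<lambda>i. circle) (\<lambda>i. warped_dist m \<alpha> (real (NN i * Q i)))
           (\<lambda>i. torus (Suc m)) (\<lambda>i x y. real (NN i) * torus_dist (Suc m) x y)"
  proof
    fix \<alpha> assume "\<alpha> \<in> range al"
    then obtain s where as: "\<alpha> = al s" by blast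
    define C where "C = (2 * real m * real P0 + 1) * (real m + 1) + (real m + 2)"
    have C1: "(2 * real m * real P0 + 1) * (real m + 1) \<le> C" and C2: "real m + 2 \<le> C"
      unfolding C_def using P0_pos by auto
    show "qi_families (\<lambda>i. circle) (\<lambda>i. warped_dist m \<alpha> (real (NN i * Q i)))
           (\<lambda>i. torus (Suc m)) (\<lambda>i x y. real (NN i) * torus_dist (Suc m) x y)"
      unfolding qi_families_def
    proof (rule exI[of _ C], rule exI[of _ "real m + 1"], intro conjI allI)
      show "1 \<le> C" using C2 by simp
      show "0 \<le> real m + 1" by simp
      fix i
      interpret L: level m "real (NN i)" "real P0" "\<lambda>j. int (D i j)" "\<lambda>j. int (cc s i j)" "al s"
      proof
        show "1 \<le> m" by (rule m1)
        show "1 \<le> real (NN i)" using NN_pos[of i] by simp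
        show "1 \<le> real P0" using P0_pos by simp
        fix j assume j: "j < m"
        show "real (NN i) \<le> real_of_int (int (D i j))" using D_ge[of i j] by simp
        show "real_of_int (int (D i j)) \<le> real P0 * real (NN i)"
          using D_le_P0[OF j, of i] by (simp flip: of_nat_mult)
        show "coprime (int (cc s i j)) (int (D i j))" by (rule cop_cc[OF j])
        show "(real m + 1) * real (NN i) * real_of_int (\<Prod>k<m. int (D i k)) *
              \<bar>al s j - real_of_int (int (cc s i j)) / real_of_int (int (D i j))\<bar> \<le> 1"
          using approx_main[OF j, of i s] by (simp add: Q_def)
      next
        fix j k assume "j < m" "k < m" "j \<noteq> k"
        then show "coprime (int (D i j)) (int (D i k))" by (rule cop_D)
      qed
      have teq: "real (NN i) * real_of_int (L.Q) = real (NN i * Q i)"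
        by (simp add: L.Q_def Q_def)
      note lq = L.level_qi[OF C1 C2, unfolded teq]
      show "\<exists>f. (\<forall>x\<in>circle. f x \<in> torus (Suc m)) \<and>
          (\<forall>x\<in>circle. \<forall>x'\<in>circle.
              warped_dist m \<alpha> (real (NN i * Q i)) x x' / C - (real m + 1) \<le> real (NN i) * torus_dist (Suc m) (f x) (f x') \<and>
              real (NN i) * torus_dist (Suc m) (f x) (f x') \<le> C * warped_dist m \<alpha> (real (NN i * Q i)) x x' + (real m + 1)) \<and>
          (\<forall>y\<in>torus (Suc m). \<exists>x\<in>circle. real (NN i) * torus_dist (Suc m) y (f x) \<le> real m + 1)"
        unfolding as by (rule lq)
    qed
  qed
qed

end

theorem main_thm:
  fixes m :: nat
  assumes "m \<ge> 1"
  shows "\<exists>t \<tau> :: nat \<Rightarrow> nat. strict_mono t \<and> strict_mono \<tau> \<and>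
     (\<exists>S. uncountable S \<and>
        S \<subseteq> {\<alpha> :: nat \<Rightarrow> real. (\<forall>j<m. 0 < \<alpha> j \<and> \<alpha> j < 1) \<and> (\<forall>j\<ge>m. \<alpha> j = 0)} \<and>
        (\<forall>\<alpha>\<in>S. qi_families (\<lambda>i. circle) (\<lambda>i. warped_dist m \<alpha> (real (t i)))
                             (\<lambda>i. torus (Suc m)) (\<lambda>i x y. real (\<tau> i) * torus_dist (Suc m) x y)))"
proof -
  have inf: "infinite {p::nat. prime p}" by (rule primes_infinite)
  interpret constr m "enumerate {p::nat. prime p}"
  proof
    show "1 \<le> m" by (rule assms)
    fix j show "prime (enumerate {p::nat. prime p} j)" using enumerate_in_set[OF inf, of j] by simp
  next
    fix j k assume "enumerate {p::nat. prime p} j = enumerate {p::nat. prime p} k"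
    then show "j = k" using enumerate_mono[OF _ inf, of j k] enumerate_mono[OF _ inf, of k j]
      by (metis less_irrefl linorder_neqE_nat)
  qed
  show ?thesis by (rule main)
qed


theorem propositionA3:
  fixes m :: nat
  assumes "m \<ge> 1"
  shows "\<exists>t \<tau> :: nat \<Rightarrow> nat. strict_mono t \<and> strict_mono \<tau> \<and>
     (\<exists>S. uncountable S \<and>
        S \<subseteq> {\<alpha> :: nat \<Rightarrow> real. (\<forall>j<m. 0 < \<alpha> j \<and> \<alpha> j < 1) \<and> (\<forall>j\<ge>m. \<alpha> j = 0)} \<and>
        (\<forall>\<alpha>\<in>S. qi_families (\<lambda>i. circle) (\<lambda>i. warped_dist m \<alpha> (real (t i)))
                             (\<lambda>i. torus (Suc m)) (\<lambda>i x y. real (\<tau> i) * torus_dist (Suc m) x y)))"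
  using main_thm[OF assms] .

end
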